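(* Let $X, Y \subset \mathbb{Z}^n$ be finite nonempty sets, let $\kappa$ be an adjacency relation on $\mathbb{Z}^n$ (so that $(X,\kappa)$ and $(Y,\kappa)$ are digital images), and let $d$ be a metric on $\mathbb{Z}^n$. Then $H_d(X,Y) \le \delta_d(X,Y)$.
   Context: A digital image is a pair $(X,\kappa)$ with $X\subset\mathbb{Z}^n$ and $\kappa$ an adjacency (a symmetric irreflexive relation) on its points. A subset is $\kappa$-connected if any two of its points are joined by a finite sequence of points of the subset, consecutive ones $\kappa$-adjacent. A function $f:(X,\kappa)\to(Y,\lambda)$ is $(\kappa,\lambda)$-continuous if it maps $\kappa$-connected subsets to $\lambda$-connected subsets; equivalently, whenever $x,x'$ are $\kappa$-adjacent, $f(x)$ and $f(x')$ are equal or $\lambda$-adjacent. "$\kappa$-continuous" means $(\kappa,\kappa)$-continuous. For a metric $d$ and nonempty finite $A,B$, the Hausdorff metric is $H_d(A,B)=\min\{\varepsilon\ge 0 : \forall a\in A\ \exists b'\in B,\ d(a,b')\le\varepsilon, \text{ and } \forall b\in B\ \exists a'\in A,\ d(a',b)\le \varepsilon\}$. Borsuk's metric of continuity $\delta_d(X,Y)$ is the greatest lower bound of the numbers $t>0$ such that there exist $\kappa$-continuous maps $f:X\to Y$ and $g:Y\to X$ with $d(x,f(x))\le t$ for all $x\in X$ and $d(y,g(y))\le t$ for all $y\in Y$. *)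

theory Defs
  imports "HOL-Analysis.Analysis"
begin

text \<open>Points of Z^n are modelled as int ^ 'n, 'n a finite index type of cardinality n.\<close>

definition is_adjacency :: "('a \<Rightarrow> 'a \<Rightarrow> bool) \<Rightarrow> bool" where
  "is_adjacency k \<longleftrightarrow> (\<forall>x y. k x y \<longrightarrow> k y x) \<and> (\<forall>x. \<not> k x x)"

definition is_metric_on :: "('a \<Rightarrow> 'a \<Rightarrow> real) \<Rightarrow> bool" where
  "is_metric_on d \<longleftrightarrow>
     (\<forall>x y. d x y \<ge> 0) \<and> (\<forall>x y. d x y = 0 \<longleftrightarrow> x = y) \<and>
     (\<forall>x y. d x y = d y x) \<and> (\<forall>x y z. d x z \<le> d x y + d y z)"

definition dconnected :: "('a \<Rightarrow> 'a \<Rightarrow> bool) \<Rightarrow> 'a set \<Rightarrow> bool" where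
  "dconnected k A \<longleftrightarrow> (\<forall>a\<in>A. \<forall>b\<in>A.
     (\<lambda>x y. x \<in> A \<and> y \<in> A \<and> k x y)\<^sup>*\<^sup>* a b)"

definition dcontinuous :: "('a \<Rightarrow> 'a \<Rightarrow> bool) \<Rightarrow> 'a set \<Rightarrow> ('b \<Rightarrow> 'b \<Rightarrow> bool) \<Rightarrow> 'b set
     \<Rightarrow> ('a \<Rightarrow> 'b) \<Rightarrow> bool" where
  "dcontinuous k X l Y f \<longleftrightarrow> f ` X \<subseteq> Y \<and>
     (\<forall>A. A \<subseteq> X \<longrightarrow> dconnected k A \<longrightarrow> dconnected l (f ` A))"

definition hausdorff_dist :: "('a \<Rightarrow> 'a \<Rightarrow> real) \<Rightarrow> 'a set \<Rightarrow> 'a set \<Rightarrow> real" where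
  "hausdorff_dist d A B = Inf {e. e \<ge> 0 \<and> (\<forall>a\<in>A. \<exists>b'\<in>B. d a b' \<le> e) \<and>
                                  (\<forall>b\<in>B. \<exists>a'\<in>A. d a' b \<le> e)}"

definition borsuk_delta :: "('a \<Rightarrow> 'a \<Rightarrow> real) \<Rightarrow> ('a \<Rightarrow> 'a \<Rightarrow> bool) \<Rightarrow> 'a set \<Rightarrow> 'a set \<Rightarrow> real" where
  "borsuk_delta d k X Y = Inf {t. t > 0 \<and> (\<exists>f g. dcontinuous k X k Y f \<and> dcontinuous k Y k X g \<and>
      (\<forall>x\<in>X. d x (f x) \<le> t) \<and> (\<forall>y\<in>Y. d y (g y) \<le> t))}"

end

theory Submission
  imports Defs
begin

lemma const_dcont:
  assumes "y0 \<in> Y"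
  shows "dcontinuous k X l Y (\<lambda>_. y0)"
  unfolding dcontinuous_def dconnected_def using assms
  by (auto simp: image_constant_conv)

theorem proposition2p6:
  fixes X Y :: "(int ^ 'n) set"
    and k :: "int ^ 'n \<Rightarrow> int ^ 'n \<Rightarrow> bool"
    and d :: "int ^ 'n \<Rightarrow> int ^ 'n \<Rightarrow> real"
  assumes "finite X" "X \<noteq> {}" "finite Y" "Y \<noteq> {}"
    and "is_adjacency k"
    and "is_metric_on d"
  shows "hausdorff_dist d X Y \<le> borsuk_delta d k X Y"
proof -
  define S where "S = {t. t > 0 \<and> (\<exists>f g. dcontinuous k X k Y f \<and> dcontinuous k Y k X g \<and>
      (\<forall>x\<in>X. d x (f x) \<le> t) \<and> (\<forall>y\<in>Y. d y (g y) \<le> t))}"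
  define E where "E = {e. e \<ge> 0 \<and> (\<forall>a\<in>X. \<exists>b'\<in>Y. d a b' \<le> e) \<and>
                                  (\<forall>b\<in>Y. \<exists>a'\<in>X. d a' b \<le> e)}"
  have pos: "\<And>x y. d x y \<ge> 0" and sym: "\<And>x y. d x y = d y x"
    using assms(6) unfolding is_metric_on_def by auto
  obtain x0 y0 where x0: "x0 \<in> X" and y0: "y0 \<in> Y" using assms(2,4) by blast
  define T where "T = 1 + (\<Sum>x\<in>X. d x y0) + (\<Sum>y\<in>Y. d y x0)"
  have s1: "(\<Sum>x\<in>X. d x y0) \<ge> 0" "(\<Sum>y\<in>Y. d y x0) \<ge> 0"
    by (auto intro: sum_nonneg pos)
  have "T \<in> S"
    unfolding S_def
  proof (intro CollectI conjI exI)
    show "T > 0" using s1 unfolding T_def by linarith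
    show "dcontinuous k X k Y (\<lambda>_. y0)" by (rule const_dcont[OF y0])
    show "dcontinuous k Y k X (\<lambda>_. x0)" by (rule const_dcont[OF x0])
    show "\<forall>x\<in>X. d x y0 \<le> T"
    proof
      fix x assume "x \<in> X"
      then have "d x y0 \<le> (\<Sum>x\<in>X. d x y0)"
        using assms(1) by (intro member_le_sum) (auto intro: pos)
      then show "d x y0 \<le> T" using s1 unfolding T_def by linarith
    qed
    show "\<forall>y\<in>Y. d y x0 \<le> T"
    proof
      fix y assume "y \<in> Y"
      then have "d y x0 \<le> (\<Sum>y\<in>Y. d y x0)"
        using assms(3) by (intro member_le_sum) (auto intro: pos)
      then show "d y x0 \<le> T" using s1 unfolding T_def by linarith
    qed
  qed
  then have ne: "S \<noteq> {}" by blast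
  have bE: "bdd_below E" unfolding E_def bdd_below_def by auto
  have SE: "t \<in> E" if "t \<in> S" for t
  proof -
    from that obtain f g where f: "dcontinuous k X k Y f" and g: "dcontinuous k Y k X g"
      and fx: "\<forall>x\<in>X. d x (f x) \<le> t" and gy: "\<forall>y\<in>Y. d y (g y) \<le> t" and tp: "t > 0"
      unfolding S_def by blast
    have "f ` X \<subseteq> Y" "g ` Y \<subseteq> X" using f g unfolding dcontinuous_def by auto
    then show ?thesis unfolding E_def using fx gy tp sym by force
  qed
  have "Inf E \<le> Inf S"
    by (rule cInf_greatest[OF ne]) (rule cInf_lower[OF SE bE])
  then show ?thesis unfolding hausdorff_dist_def borsuk_delta_def S_def E_def .
qed

end
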